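(* Let $\phi:\mathbb{R}_+\to\mathbb{R}_+$ be non-negative continuous, $d\nu=\phi(r)\,dr$, and let $I,J,K,L$ be non-negative functions on $\mathbb{R}_+$ such that $I(ab)\le bJ(a)+K(aL(b))$ for all $a,b\ge0$, $J$ is a lower isoperimetric function for $\nu$, $K$ is non-decreasing and concave, and $L$ is concave. Then every non-negative step function $f$ on $\mathbb{R}_+$ satisfies $$I\Big(\int_{\mathbb{R}_+}f\,d\nu\Big)\le K\Big(\int_{\mathbb{R}_+}L(f)\,d\nu\Big)+V_\nu(f).$$
   Context: $\mathbb{R}_+=[0,\infty)$. For Borel $A\subset\mathbb{R}_+$, $\nu^+(A)=\liminf_{r\to0^+}\frac{\nu(A^r)-\nu(A)}{r}$ with $A^r=\{x\in\mathbb{R}_+:\operatorname{dist}(x,A)<r\}$; $J$ is a lower isoperimetric function for $\nu$ if $\nu^+(A)\ge J(\nu(A))$ for all Borel $A$. A step function is a finite sum of elementary step functions $b\mathbf{1}_{[r,s)}$ ($b\in\mathbb{R}$, $0\le r<s$). The weighted total variation of a function $f$ with bounded support is $V_\nu(f)=\sup\sum_{k=1}^{m}|f(\xi_k)-f(\xi_{k-1})|\,\phi(\xi_{k-1})$, the supremum over all $m\in\mathbb{N}$ and increasing sequences $\xi_0<\dots<\xi_m$ of non-negative reals with $\operatorname{supp}f\subset[\xi_0,\xi_m]$. *)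

theory Defs
  imports "HOL-Analysis.Analysis"
begin

definition nu :: "(real \<Rightarrow> real) \<Rightarrow> real measure" where
  "nu \<phi> = density lborel (\<lambda>x. ennreal (indicator {0..} x * \<phi> x))"

definition enlarge :: "real set \<Rightarrow> real \<Rightarrow> real set" where
  "enlarge A r = {x. 0 \<le> x \<and> (\<exists>a\<in>A. dist x a < r)}"

text \<open>Boundary measure \<nu>^+(A) = liminf_{r \<rightarrow> 0+} (\<nu>(A^r) - \<nu>(A))/r, in the extended reals
  (only used for A with \<nu>(A) finite).\<close>
definition nu_plus :: "(real \<Rightarrow> real) \<Rightarrow> real set \<Rightarrow> ereal" where
  "nu_plus \<phi> A = Liminf (at_right 0)
     (\<lambda>r. (enn2ereal (emeasure (nu \<phi>) (enlarge A r)) - ereal (measure (nu \<phi>) A)) / ereal r)"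

definition lower_isoperimetric :: "(real \<Rightarrow> real) \<Rightarrow> (real \<Rightarrow> real) \<Rightarrow> bool" where
  "lower_isoperimetric \<phi> J \<longleftrightarrow>
     (\<forall>A. A \<in> sets borel \<and> A \<subseteq> {0..} \<and> emeasure (nu \<phi>) A < \<infinity> \<longrightarrow>
          ereal (J (measure (nu \<phi>) A)) \<le> nu_plus \<phi> A)"

definition step_fun :: "(real \<Rightarrow> real) \<Rightarrow> bool" where
  "step_fun f \<longleftrightarrow> (\<exists>ts :: (real \<times> real \<times> real) list.
      (\<forall>(b, r, s) \<in> set ts. 0 \<le> r \<and> r < s) \<and>
      f = (\<lambda>x. \<Sum>(b, r, s) \<leftarrow> ts. b * indicator {r..<s} x))"

definition weighted_var :: "(real \<Rightarrow> real) \<Rightarrow> (real \<Rightarrow> real) \<Rightarrow> ereal" where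
  "weighted_var \<phi> f = Sup {ereal (\<Sum>k = 1..m. \<bar>f (\<xi> k) - f (\<xi> (k - 1))\<bar> * \<phi> (\<xi> (k - 1))) | m \<xi>.
      0 \<le> \<xi> 0 \<and> (\<forall>k<m. \<xi> k < \<xi> (Suc k)) \<and> closure {x. f x \<noteq> 0} \<subseteq> {\<xi> 0 .. \<xi> m}}"

text \<open>K evaluated at a value of [0,\<infinity>]; at \<infinity> we use the monotone limit sup K.\<close>
definition K_ext :: "(real \<Rightarrow> real) \<Rightarrow> ennreal \<Rightarrow> ereal" where
  "K_ext K x = (if x = \<infinity> then (SUP t\<in>{0..}. ereal (K t)) else ereal (K (enn2real x)))"

end

theory Submission
  imports Defs
begin


lemma concave_mono_aux:
  fixes L :: "real \<Rightarrow> real"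
  assumes conc: "concave_on {0..} L" and nn: "\<forall>x\<ge>0. 0 \<le> L x"
    and xy: "0 \<le> x" "x \<le> y"
  shows "L x \<le> L y"
proof (rule ccontr)
  assume "\<not> L x \<le> L y"
  hence lt: "L y < L x" by simp
  have Ly: "0 \<le> L y" using nn xy by auto
  hence Lx: "0 < L x" using lt by linarith
  define v where "v = (L x - L y) / (2 * L x)"
  have v0: "0 < v" using lt Lx by (simp add: v_def)
  have v1: "v \<le> 1/2" using Ly Lx by (simp add: v_def field_simps)
  define z where "z = x + (y - x) / v"
  have z0: "0 \<le> z" using xy v0 by (simp add: z_def)
  have yz: "y = (1 - v) * x + v * z" using v0 by (simp add: z_def field_simps)
  have "(1 - v) * L x + v * L z \<le> L ((1 - v) * x + v * z)"
    using concave_onD[OF conc, of v x z] xy z0 v0 v1 by simp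
  hence "(1 - v) * L x \<le> L y" using yz nn z0 v0
    by (smt (verit, ccfv_SIG) mult_nonneg_nonneg)
  moreover have "(1 - v) * L x = L x - (L x - L y)/2" using Lx by (simp add: v_def field_simps)
  ultimately show False using lt by argo
qed

lemma concave_scale_aux:
  fixes L :: "real \<Rightarrow> real"
  assumes conc: "concave_on {0..} L" and nn: "\<forall>x\<ge>0. 0 \<le> L x"
    and s: "0 \<le> s" "s \<le> 1" and t: "0 \<le> t"
  shows "s * L t \<le> L (s * t)"
proof -
  have "(1 - s) * L 0 + s * L t \<le> L ((1 - s) * 0 + s * t)"
    using concave_onD[OF conc, of s 0 t] s t by simp
  moreover have "0 \<le> (1 - s) * L 0" using nn s by simp
  ultimately show ?thesis by simp
qed

lemma pointwise_aux:
  fixes L :: "real \<Rightarrow> real" and h \<mu> :: "nat \<Rightarrow> real"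
  assumes conc: "concave_on {0..} L" and nn: "\<forall>x\<ge>0. 0 \<le> L x"
    and S: "finite S" and hpos: "\<forall>j\<in>S. 0 < h j" and mpos: "\<forall>j\<in>S. 0 < \<mu> j"
    and X: "0 < X" and sumX: "(\<Sum>j\<in>S. h j * \<mu> j) \<le> X"
    and F: "(\<Sum>j\<in>S. h j) \<le> F"
  shows "(\<Sum>j\<in>S. h j * \<mu> j * L (X / \<mu> j) / X) \<le> L F"
proof (cases "S = {}")
  case True thus ?thesis using nn F by simp
next
  case False
  define s where "s = (\<Sum>j\<in>S. h j * \<mu> j) / X"
  have spos: "0 < s" unfolding s_def using X False S hpos mpos
    by (intro divide_pos_pos sum_pos) auto
  have s1: "s \<le> 1" unfolding s_def using X sumX by simp
  define H where "H = (\<Sum>j\<in>S. h j)"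
  have H0: "0 \<le> H" unfolding H_def using hpos by (intro sum_nonneg) auto
  define lam where "lam j = h j * \<mu> j / (X * s)" for j
  have lsum: "(\<Sum>j\<in>S. lam j) = 1"
  proof -
    have ne: "(\<Sum>j\<in>S. h j * \<mu> j) \<noteq> 0" using spos unfolding s_def by auto
    show ?thesis
      unfolding lam_def using ne X by (simp add: s_def sum_divide_distrib[symmetric])
  qed
  have "(\<Sum>j\<in>S. lam j * L (X / \<mu> j)) \<le> L (\<Sum>j\<in>S. lam j *\<^sub>R (X / \<mu> j))"
    by (rule concave_on_sum[OF S False conc lsum])
       (use hpos mpos X spos in \<open>auto simp: lam_def intro!: divide_nonneg_pos mult_nonneg_nonneg less_imp_le\<close>)
  also have "(\<Sum>j\<in>S. lam j *\<^sub>R (X / \<mu> j)) = H / s"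
    unfolding H_def lam_def using mpos X spos
    by (auto simp: sum_divide_distrib intro!: sum.cong)
  finally have j1: "(\<Sum>j\<in>S. lam j * L (X / \<mu> j)) \<le> L (H / s)" .
  have "(\<Sum>j\<in>S. h j * \<mu> j * L (X / \<mu> j) / X) = s * (\<Sum>j\<in>S. lam j * L (X / \<mu> j))"
    unfolding lam_def using spos X by (simp add: sum_distrib_left sum_divide_distrib)
  also have "\<dots> \<le> s * L (H / s)" using j1 spos by simp
  also have "\<dots> \<le> L (s * (H / s))"
    by (rule concave_scale_aux[OF conc nn]) (use spos s1 H0 in auto)
  also have "s * (H / s) = H" using spos by simp
  also have "L H \<le> L F" by (rule concave_mono_aux[OF conc nn H0]) (use F H_def in simp)
  finally show ?thesis .
qed



lemma strict_aux:
  fixes c :: "nat \<Rightarrow> real"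
  assumes "\<forall>j<n. c j < c (Suc j)" "i < k" "k \<le> n"
  shows "c i < c k"
  using assms(2,3)
proof (induction k)
  case 0 thus ?case by simp
next
  case (Suc k)
  have "c k < c (Suc k)" using assms(1) Suc.prems by simp
  thus ?case using Suc by (cases "i = k") auto
qed

lemma mono_aux:
  fixes c :: "nat \<Rightarrow> real"
  assumes "\<forall>j<n. c j < c (Suc j)" "i \<le> k" "k \<le> n"
  shows "c i \<le> c k"
  using strict_aux[OF assms(1), of i k] assms(2,3) by (cases "i = k") auto

lemma sorted_set_aux:
  fixes S :: "real set"
  assumes fin: "finite S" and z: "0 \<in> S" and nn: "\<forall>y\<in>S. 0 \<le> y"
  obtains m q where "q 0 = 0" "\<forall>i<m. q i < q (Suc i)" "\<forall>y\<in>S. \<exists>k\<le>m. y = q k"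
    "\<forall>k\<le>m. q k \<in> S"
proof -
  define xs where "xs = sorted_list_of_set S"
  have sw: "sorted_wrt (<) xs" unfolding xs_def by (rule strict_sorted_list_of_set)
  have set: "set xs = S" unfolding xs_def using fin by simp
  have len: "length xs \<ge> 1" using z set by (cases xs) auto
  define m where "m = length xs - 1"
  have mlen: "k \<le> m \<longleftrightarrow> k < length xs" for k using len unfolding m_def by auto
  have inc: "\<forall>i<m. xs ! i < xs ! (Suc i)"
  proof (intro allI impI)
    fix i assume "i < m"
    hence "Suc i < length xs" using mlen[of "Suc i"] by simp
    thus "xs ! i < xs ! (Suc i)" using sorted_wrt_nth_less[OF sw, of i "Suc i"] by simp
  qed
  have all: "\<forall>y\<in>S. \<exists>k\<le>m. y = xs ! k"
  proof
    fix y assume "y \<in> S"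
    then obtain k where "k < length xs" "xs ! k = y" using set by (auto simp: in_set_conv_nth)
    thus "\<exists>k\<le>m. y = xs ! k" using mlen by auto
  qed
  have mem: "\<forall>k\<le>m. xs ! k \<in> S"
  proof (intro allI impI)
    fix k assume "k \<le> m"
    hence "k < length xs" using mlen by simp
    hence "xs ! k \<in> set xs" by (rule nth_mem)
    thus "xs ! k \<in> S" using set by simp
  qed
  have x0: "xs ! 0 = 0"
  proof -
    obtain k where k: "k \<le> m" "0 = xs ! k" using all z by blast
    have "xs ! 0 \<le> xs ! k" using mono_aux[OF inc, of 0 k] k by simp
    moreover have "0 \<le> xs ! 0" using mem nn by auto
    ultimately show ?thesis using k by simp
  qed
  show ?thesis by (rule that[of "\<lambda>k. xs ! k" m]) (use x0 inc all mem in simp_all)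
qed

lemma sum_list_zero_aux:
  "(\<forall>t\<in>set ts. g t = (0::real)) \<Longrightarrow> sum_list (map g ts) = 0"
  by (induction ts) auto

lemma cell_find:
  fixes p :: "nat \<Rightarrow> real"
  assumes "\<forall>i<N. p i < p (Suc i)" "p 0 \<le> x" "x < p N"
  shows "\<exists>i<N. p i \<le> x \<and> x < p (Suc i)"
  using assms
proof (induction N)
  case 0 thus ?case by simp
next
  case (Suc N)
  show ?case
  proof (cases "x < p N")
    case True
    with Suc obtain i where "i<N" "p i \<le> x \<and> x < p (Suc i)" by auto
    thus ?thesis by (intro exI[of _ i]) auto
  next
    case False thus ?thesis using Suc.prems by (intro exI[of _ N]) auto
  qed
qed

lemma step_structure:
  fixes f :: "real \<Rightarrow> real"
  assumes "step_fun f"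
  obtains N p where "p 0 = 0" "\<forall>i<N. p i < p (Suc i)"
    "\<forall>i<N. \<forall>x. p i \<le> x \<and> x < p (Suc i) \<longrightarrow> f x = f (p i)"
    "\<forall>x. p N \<le> x \<longrightarrow> f x = 0" "\<forall>x<0. f x = 0"
proof -
  obtain ts :: "(real \<times> real \<times> real) list" where
    ts: "\<forall>(b, r, s) \<in> set ts. 0 \<le> r \<and> r < s"
    and f: "f = (\<lambda>x. \<Sum>(b, r, s) \<leftarrow> ts. b * indicator {r..<s} x)"
    using assms unfolding step_fun_def by (elim exE conjE) simp
  have ts': "\<forall>t\<in>set ts. 0 \<le> fst (snd t) \<and> fst (snd t) < snd (snd t)"
  proof
    fix t assume "t \<in> set ts"
    moreover obtain b r s where "t = (b, r, s)" by (cases t) auto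
    ultimately show "0 \<le> fst (snd t) \<and> fst (snd t) < snd (snd t)" using ts by auto
  qed
  define S where "S = insert 0 ((\<lambda>t. fst (snd t)) ` set ts \<union> (\<lambda>t. snd (snd t)) ` set ts)"
  have finS: "finite S" unfolding S_def by simp
  have nnS: "\<forall>y\<in>S. 0 \<le> y"
  proof
    fix y assume "y \<in> S"
    hence "y = 0 \<or> (\<exists>t\<in>set ts. y = fst (snd t)) \<or> (\<exists>t\<in>set ts. y = snd (snd t))"
      unfolding S_def by blast
    thus "0 \<le> y" using ts' by fastforce
  qed
  have rS: "\<And>b r s. (b, r, s) \<in> set ts \<Longrightarrow> r \<in> S \<and> s \<in> S"
  proof -
    fix b r s assume "(b, r, s) \<in> set ts"
    hence "r \<in> (\<lambda>t. fst (snd t)) ` set ts" "s \<in> (\<lambda>t. snd (snd t)) ` set ts"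
      by (force intro: image_eqI)+
    thus "r \<in> S \<and> s \<in> S" unfolding S_def by blast
  qed
  have z0: "0 \<in> S" unfolding S_def by simp
  obtain N p where p0: "p 0 = 0" and inc: "\<forall>i<N. p i < p (Suc i)"
    and all: "\<forall>y\<in>S. \<exists>k\<le>N. y = p k" and mem: "\<forall>k\<le>N. p k \<in> S"
    by (rule sorted_set_aux[OF finS z0 nnS])
  have key: "y \<le> x \<longleftrightarrow> y \<le> p i"
    if y: "y \<in> S" and i: "i < N" and x1: "p i \<le> x" and x2: "x < p (Suc i)" for x y i
  proof -
    have "\<exists>k\<le>N. y = p k" using all y by blast
    then obtain k where k1: "k \<le> N" and k2: "y = p k" by blast
    show ?thesis
    proof (cases "k \<le> i")
      case True
      have "p k \<le> p i" by (rule mono_aux[OF inc True]) (use i in linarith)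
      thus ?thesis using k2 x1 by linarith
    next
      case False
      have "p (Suc i) \<le> p k" by (rule mono_aux[OF inc]) (use False k1 in linarith)+
      thus ?thesis using k2 x1 x2 by linarith
    qed
  qed
  have cell: "\<forall>i<N. \<forall>x. p i \<le> x \<and> x < p (Suc i) \<longrightarrow> f x = f (p i)"
  proof (intro allI impI)
    fix i x assume i: "i < N" and x: "p i \<le> x \<and> x < p (Suc i)"
    have "\<forall>t\<in>set ts. (case t of (b, r, s) \<Rightarrow> b * indicator {r..<s} x)
             = (case t of (b, r, s) \<Rightarrow> b * indicator {r..<s} (p i))"
    proof
      fix t assume t: "t \<in> set ts"
      obtain b r s where brs: "t = (b, r, s)" by (cases t) auto
      have rs: "r \<in> S" "s \<in> S" using rS t brs by auto
      have "r \<le> x \<longleftrightarrow> r \<le> p i" using key[OF rs(1) i] x by blast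
      moreover have "s \<le> x \<longleftrightarrow> s \<le> p i" using key[OF rs(2) i] x by blast
      ultimately have "r \<le> x \<longleftrightarrow> r \<le> p i" "s \<le> x \<longleftrightarrow> s \<le> p i" by blast+
      thus "(case t of (b, r, s) \<Rightarrow> b * indicator {r..<s} x)
             = (case t of (b, r, s) \<Rightarrow> b * indicator {r..<s} (p i))"
        using brs by (auto simp: indicator_def not_le)
    qed
    hence eq: "map (\<lambda>(b, r, s). b * indicator {r..<s} x) ts = map (\<lambda>(b, r, s). b * indicator {r..<s} (p i)) ts"
      by (simp only: map_eq_conv)
    have "f x = sum_list (map (\<lambda>(b, r, s). b * indicator {r..<s} x) ts)" unfolding f by (rule refl)
    also have "\<dots> = sum_list (map (\<lambda>(b, r, s). b * indicator {r..<s} (p i)) ts)" by (simp only: eq)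
    also have "\<dots> = f (p i)" unfolding f by (rule refl)
    finally show "f x = f (p i)" .
  qed
  have tail: "\<forall>x. p N \<le> x \<longrightarrow> f x = 0"
  proof (intro allI impI)
    fix x assume x: "p N \<le> x"
    have "\<forall>t\<in>set ts. (case t of (b, r, s) \<Rightarrow> b * indicator {r..<s} x) = (0::real)"
    proof
      fix t assume t: "t \<in> set ts"
      obtain b r s where brs: "t = (b, r, s)" by (cases t) auto
      obtain k where "k \<le> N" "s = p k" using all rS t brs by blast
      hence "s \<le> p N" using mono_aux[OF inc, of k N] by simp
      thus "(case t of (b, r, s) \<Rightarrow> b * indicator {r..<s} x) = 0" using brs x by auto
    qed
    thus "f x = 0" unfolding f by (simp add: sum_list_zero_aux)
  qed
  have neg: "\<forall>x<0. f x = 0"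
  proof (intro allI impI)
    fix x :: real assume x: "x < 0"
    have "\<forall>t\<in>set ts. (case t of (b, r, s) \<Rightarrow> b * indicator {r..<s} x) = (0::real)"
    proof
      fix t assume t: "t \<in> set ts"
      obtain b r s where brs: "t = (b, r, s)" by (cases t) auto
      have "0 \<le> r" using ts' t brs by auto
      thus "(case t of (b, r, s) \<Rightarrow> b * indicator {r..<s} x) = 0" using brs x by auto
    qed
    thus "f x = 0" unfolding f by (simp add: sum_list_zero_aux)
  qed
  show ?thesis by (rule that[OF p0 inc cell tail neg])
qed

lemma f_measurable_aux:
  fixes ts :: "(real \<times> real \<times> real) list"
  shows "(\<lambda>x. \<Sum>(b, r, s) \<leftarrow> ts. b * indicator {r..<s} x) \<in> borel_measurable borel"
proof (induction ts)
  case Nil thus ?case by simp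
next
  case (Cons t ts)
  obtain b r s where t: "t = (b, r, s)" by (cases t) auto
  have "(\<lambda>x. b * indicator {r..<s} x + (\<Sum>(b, r, s) \<leftarrow> ts. b * indicator {r..<s} x)) \<in> borel_measurable borel"
    using Cons.IH by measurable
  thus ?case using t by simp
qed

lemma step_measurable:
  assumes "step_fun f" shows "f \<in> borel_measurable borel"
proof -
  obtain ts :: "(real \<times> real \<times> real) list" where
    "f = (\<lambda>x. \<Sum>(b, r, s) \<leftarrow> ts. b * indicator {r..<s} x)"
    using assms unfolding step_fun_def by (elim exE conjE) simp
  thus ?thesis using f_measurable_aux[of ts] by simp
qed


context fixes \<phi> :: "real \<Rightarrow> real" begin

lemma nu_sets[simp]: "sets (nu \<phi>) = sets borel"
  unfolding nu_def by simp

lemma nu_space[simp]: "space (nu \<phi>) = UNIV"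
  unfolding nu_def by simp

lemma nu_density_meas:
  assumes "continuous_on {0..} \<phi>"
  shows "(\<lambda>x. ennreal (indicator {0..} x * \<phi> x)) \<in> borel_measurable borel"
proof -
  have "(\<lambda>x. indicator {0::real..} x *\<^sub>R \<phi> x) \<in> borel_measurable borel"
    by (rule borel_measurable_continuous_on_indicator) (use assms in auto)
  thus ?thesis by simp
qed

lemma emeasure_nu_Icc:
  assumes cont: "continuous_on {0..} \<phi>" and nn: "\<forall>x\<ge>0. 0 \<le> \<phi> x"
    and ab: "0 \<le> a"
  shows "emeasure (nu \<phi>) {a..b} = ennreal (integral {a..b} \<phi>)"
proof -
  have "emeasure (nu \<phi>) {a..b} = (\<integral>\<^sup>+x\<in>{a..b}. ennreal (indicator {0..} x * \<phi> x) \<partial>lborel)"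
    unfolding nu_def by (rule emeasure_density) (use nu_density_meas[OF cont] in auto)
  also have "\<dots> = (\<integral>\<^sup>+x. ennreal (indicator {a..b} x * \<phi> x) \<partial>lborel)"
    by (intro nn_integral_cong) (use ab in \<open>auto simp: indicator_def\<close>)
  also have "\<dots> = ennreal (integral {a..b} \<phi>)"
  proof (rule nn_integral_has_integral_lebesgue)
    show "\<And>x. x \<in> {a..b} \<Longrightarrow> 0 \<le> \<phi> x" using nn ab by auto
    have "continuous_on {a..b} \<phi>" by (rule continuous_on_subset[OF cont]) (use ab in auto)
    thus "(\<phi> has_integral integral {a..b} \<phi>) {a..b}"
      using integrable_continuous_interval integrable_integral by blast
  qed
  finally show ?thesis .
qed

lemma integral_nonneg_aux:
  assumes cont: "continuous_on {0..} \<phi>" and nn: "\<forall>x\<ge>0. 0 \<le> \<phi> x" and ab: "0 \<le> a"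
  shows "0 \<le> integral {a..b} \<phi>"
proof -
  have "continuous_on {a..b} \<phi>" by (rule continuous_on_subset[OF cont]) (use ab in auto)
  hence "\<phi> integrable_on {a..b}" using integrable_continuous_interval by blast
  thus ?thesis by (rule integral_nonneg) (use nn ab in auto)
qed

lemma measure_nu_Icc:
  assumes cont: "continuous_on {0..} \<phi>" and nn: "\<forall>x\<ge>0. 0 \<le> \<phi> x" and ab: "0 \<le> a"
  shows "measure (nu \<phi>) {a..b} = integral {a..b} \<phi>"
  unfolding measure_def using emeasure_nu_Icc[OF assms] integral_nonneg_aux[OF assms] by simp

lemma deriv_aux:
  assumes cont: "continuous_on {0..} \<phi>" and p: "0 \<le> p" "p \<le> B"
  shows "((\<lambda>y. (integral {0..y} \<phi> - integral {0..p} \<phi>) / (y - p)) \<longlongrightarrow> \<phi> p) (at p within {0..B})"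
proof -
  have "continuous_on {0..B} \<phi>" by (rule continuous_on_subset[OF cont]) (use p in auto)
  hence "((\<lambda>u. integral {0..u} \<phi>) has_vector_derivative \<phi> p) (at p within {0..B})"
    using integral_has_vector_derivative p by auto
  hence "((\<lambda>u. integral {0..u} \<phi>) has_real_derivative \<phi> p) (at p within {0..B})"
    using has_real_derivative_iff_has_vector_derivative by blast
  thus ?thesis by (simp add: has_field_derivative_iff)
qed

lemma combine_aux:
  assumes cont: "continuous_on {0..} \<phi>" and "0 \<le> a" "a \<le> c" "c \<le> b"
  shows "integral {a..b} \<phi> = integral {a..c} \<phi> + integral {c..b} \<phi>"
proof -
  have "continuous_on {a..b} \<phi>" by (rule continuous_on_subset[OF cont]) (use assms in auto)
  hence "\<phi> integrable_on {a..b}" using integrable_continuous_interval by blast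
  thus ?thesis using Henstock_Kurzweil_Integration.integral_combine[of a c b \<phi>] assms by simp
qed

lemma lim_right_aux:
  assumes cont: "continuous_on {0..} \<phi>" and p: "0 \<le> p"
  shows "((\<lambda>r. integral {p..p+r} \<phi> / r) \<longlongrightarrow> \<phi> p) (at_right 0)"
proof -
  have T: "((\<lambda>y. (integral {0..y} \<phi> - integral {0..p} \<phi>) / (y - p)) \<longlongrightarrow> \<phi> p) (at p within {0..p+1})"
    by (rule deriv_aux[OF cont p]) simp
  have FL: "filterlim (\<lambda>r. p + r) (at p within {0..p+1}) (at_right (0::real))"
    unfolding filterlim_at
  proof
    show "\<forall>\<^sub>F x in at_right 0. p + x \<in> {0..p + 1} \<and> p + x \<noteq> p"
      unfolding eventually_at_right_field using p by (intro exI[of _ 1]) auto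
    have "((\<lambda>r. p + r) \<longlongrightarrow> p + 0) (at_right (0::real))" by (intro tendsto_intros)
    thus "((\<lambda>r. p + r) \<longlongrightarrow> p) (at_right (0::real))" by simp
  qed
  have L: "((\<lambda>r. (integral {0..p+r} \<phi> - integral {0..p} \<phi>) / (p + r - p)) \<longlongrightarrow> \<phi> p) (at_right 0)"
    using filterlim_compose[OF T FL] by simp
  show ?thesis
  proof (rule Lim_transform_eventually[OF L])
    show "\<forall>\<^sub>F r in at_right 0. (integral {0..p+r} \<phi> - integral {0..p} \<phi>) / (p + r - p) = integral {p..p+r} \<phi> / r"
      unfolding eventually_at_right_field
    proof (intro exI[of _ 1] conjI allI impI)
      fix r :: real assume "0 < r" "r < 1"
      thus "(integral {0..p+r} \<phi> - integral {0..p} \<phi>) / (p + r - p) = integral {p..p+r} \<phi> / r"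
        using combine_aux[OF cont, of 0 p "p+r"] p by simp
    qed simp
  qed
qed

lemma lim_left_aux:
  assumes cont: "continuous_on {0..} \<phi>" and p: "0 < p"
  shows "((\<lambda>r. integral {p-r..p} \<phi> / r) \<longlongrightarrow> \<phi> p) (at_right 0)"
proof -
  have T: "((\<lambda>y. (integral {0..y} \<phi> - integral {0..p} \<phi>) / (y - p)) \<longlongrightarrow> \<phi> p) (at p within {0..p})"
    by (rule deriv_aux[OF cont]) (use p in auto)
  have FL: "filterlim (\<lambda>r. p - r) (at p within {0..p}) (at_right (0::real))"
    unfolding filterlim_at
  proof
    show "\<forall>\<^sub>F x in at_right 0. p - x \<in> {0..p} \<and> p - x \<noteq> p"
      unfolding eventually_at_right_field using p by (intro exI[of _ p]) auto
    have "((\<lambda>r. p - r) \<longlongrightarrow> p - 0) (at_right (0::real))" by (intro tendsto_intros)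
    thus "((\<lambda>r. p - r) \<longlongrightarrow> p) (at_right (0::real))" by simp
  qed
  have L: "((\<lambda>r. (integral {0..p-r} \<phi> - integral {0..p} \<phi>) / (p - r - p)) \<longlongrightarrow> \<phi> p) (at_right 0)"
    using filterlim_compose[OF T FL] by simp
  show ?thesis
  proof (rule Lim_transform_eventually[OF L])
    show "\<forall>\<^sub>F r in at_right 0. (integral {0..p-r} \<phi> - integral {0..p} \<phi>) / (p - r - p) = integral {p-r..p} \<phi> / r"
      unfolding eventually_at_right_field
    proof (intro exI[of _ p] conjI allI impI)
      fix r :: real assume r: "0 < r" "r < p"
      have "integral {0..p} \<phi> = integral {0..p-r} \<phi> + integral {p-r..p} \<phi>"
        using combine_aux[OF cont, of 0 "p-r" p] r by simp
      thus "(integral {0..p-r} \<phi> - integral {0..p} \<phi>) / (p - r - p) = integral {p-r..p} \<phi> / r"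
        using r by (simp add: field_simps)
    qed (use p in simp)
  qed
qed

end


lemma enn_aux: assumes "x \<le> ennreal t" "0 \<le> t" shows "enn2ereal x \<le> ereal t"
  using assms by (metis enn2ereal_ennreal less_eq_ennreal.rep_eq)

lemma delta_ex:
  fixes p :: "nat \<Rightarrow> real"
  assumes "\<forall>i<N. p i < p (Suc i)"
  obtains d where "0 < d" "\<forall>i<N. d \<le> p (Suc i) - p i"
proof -
  define D where "D = insert 1 ((\<lambda>i. p (Suc i) - p i) ` {..<N})"
  have fin: "finite D" "D \<noteq> {}" unfolding D_def by auto
  have pos: "\<forall>y\<in>D. 0 < y" unfolding D_def using assms by auto
  have "0 < Min D" using Min_gr_iff[OF fin] pos by blast
  moreover have "\<forall>i<N. Min D \<le> p (Suc i) - p i"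
  proof (intro allI impI)
    fix i assume "i < N"
    hence "p (Suc i) - p i \<in> D" unfolding D_def by blast
    thus "Min D \<le> p (Suc i) - p i" using Min_le[OF fin(1)] by blast
  qed
  ultimately show ?thesis using that by blast
qed

lemma cell_ex:
  fixes p :: "nat \<Rightarrow> real" and f :: "real \<Rightarrow> real"
  assumes p0: "p 0 = 0" and inc: "\<forall>i<N. p i < p (Suc i)"
    and cell: "\<forall>i<N. \<forall>x. p i \<le> x \<and> x < p (Suc i) \<longrightarrow> f x = f (p i)"
    and tail: "\<forall>x. p N \<le> x \<longrightarrow> f x = 0" and x: "0 \<le> x"
  obtains i where "i \<le> N" "p i \<le> x" "i < N \<Longrightarrow> x < p (Suc i)" "f x = f (p i)"
proof (cases "x < p N")
  case True
  have "p 0 \<le> x" using p0 x by simp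
  then obtain i where i: "i < N" "p i \<le> x" "x < p (Suc i)" using cell_find[OF inc _ True] by blast
  have "f x = f (p i)" using cell i by blast
  show ?thesis by (rule that[of i]) (use i \<open>f x = f (p i)\<close> in auto)
next
  case False
  hence "f x = 0" "f (p N) = 0" using tail by auto
  show ?thesis by (rule that[of N]) (use False \<open>f x = 0\<close> \<open>f (p N) = 0\<close> in auto)
qed

context
  fixes \<phi> f :: "real \<Rightarrow> real" and p :: "nat \<Rightarrow> real" and N :: nat and c :: real
  assumes cont: "continuous_on {0..} \<phi>" and phinn: "\<forall>x\<ge>0. 0 \<le> \<phi> x"
    and p0: "p 0 = 0" and inc: "\<forall>i<N. p i < p (Suc i)"
    and cell: "\<forall>i<N. \<forall>x. p i \<le> x \<and> x < p (Suc i) \<longrightarrow> f x = f (p i)"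
    and tail: "\<forall>x. p N \<le> x \<longrightarrow> f x = 0"
    and fmeas: "f \<in> borel_measurable borel"
    and cpos: "0 < c"
begin

definition "lft i \<longleftrightarrow> f (p (i - 1)) < c \<and> c \<le> f (p i)"
definition "rgt i \<longleftrightarrow> c \<le> f (p (i - 1)) \<and> f (p i) < c"
definition "EE i r = (if lft i then {p i - r..p i} else if rgt i then {p i..p i + r} else {})"
definition "mm i r = (if lft i then integral {p i - r..p i} \<phi> else if rgt i then integral {p i..p i + r} \<phi> else 0)"

lemma A_sub: "{x. 0 \<le> x \<and> c \<le> f x} \<subseteq> {0..p N}"
proof
  fix x assume "x \<in> {x. 0 \<le> x \<and> c \<le> f x}"
  hence x0: "0 \<le> x" and cx: "c \<le> f x" by auto
  have "x < p N"
  proof (rule ccontr)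
    assume "\<not> x < p N"
    hence "f x = 0" using tail by auto
    thus False using cx cpos by simp
  qed
  thus "x \<in> {0..p N}" using x0 by auto
qed

lemma A_meas: "{x. 0 \<le> x \<and> c \<le> f x} \<in> sets borel"
proof -
  have "{x. c \<le> f x} \<in> sets borel" using fmeas unfolding borel_measurable_iff_ge by simp
  moreover have "{x::real. 0 \<le> x} \<in> sets borel" by simp
  ultimately have "{x. 0 \<le> x} \<inter> {x. c \<le> f x} \<in> sets borel" by blast
  thus ?thesis by (simp add: Collect_conj_eq)
qed

lemma A_fin: "emeasure (nu \<phi>) {x. 0 \<le> x \<and> c \<le> f x} < \<infinity>"
proof -
  have "emeasure (nu \<phi>) {x. 0 \<le> x \<and> c \<le> f x} \<le> emeasure (nu \<phi>) {0..p N}"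
    by (rule emeasure_mono[OF A_sub]) simp
  also have "\<dots> = ennreal (integral {0..p N} \<phi>)" by (rule emeasure_nu_Icc[OF cont phinn]) simp
  finally show ?thesis by (simp add: le_less_trans)
qed

lemma p_ge: "i \<le> N \<Longrightarrow> 0 \<le> p i"
  using mono_aux[OF inc, of 0 i] p0 by simp

lemma enlarge_sub:
  assumes d: "0 < d" "\<forall>i<N. d \<le> p (Suc i) - p i" and r: "0 < r" "r < d"
  shows "enlarge {x. 0 \<le> x \<and> c \<le> f x} r \<subseteq> {x. 0 \<le> x \<and> c \<le> f x} \<union> (\<Union>i\<in>{1..N}. EE i r)"
proof
  fix x assume "x \<in> enlarge {x. 0 \<le> x \<and> c \<le> f x} r"
  then obtain a where x0: "0 \<le> x" and a: "0 \<le> a" "c \<le> f a" and xa: "dist x a < r"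
    unfolding enlarge_def by auto
  show "x \<in> {x. 0 \<le> x \<and> c \<le> f x} \<union> (\<Union>i\<in>{1..N}. EE i r)"
  proof (cases "c \<le> f x")
    case True thus ?thesis using x0 by auto
  next
    case False
    obtain i where i: "i \<le> N" "p i \<le> x" "i < N \<Longrightarrow> x < p (Suc i)" "f x = f (p i)"
      using cell_ex[OF p0 inc cell tail x0] by blast
    obtain k where k: "k \<le> N" "p k \<le> a" "k < N \<Longrightarrow> a < p (Suc k)" "f a = f (p k)"
      using cell_ex[OF p0 inc cell tail a(1)] by blast
    have ik: "i \<noteq> k" using False a i k by auto
    show ?thesis
    proof (cases "i < k")
      case True
      have xi: "x < p (Suc i)" using i True k by auto
      have kk: "k = Suc i"
      proof (rule ccontr)
        assume "k \<noteq> Suc i"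
        hence "Suc (Suc i) \<le> k" using True by auto
        hence "p (Suc (Suc i)) \<le> p k" using mono_aux[OF inc] k by auto
        moreover have "d \<le> p (Suc (Suc i)) - p (Suc i)" using d \<open>Suc (Suc i) \<le> k\<close> k by auto
        ultimately show False using xi k xa r by (auto simp: dist_real_def)
      qed
      have "lft k" unfolding lft_def using kk i k False a by auto
      moreover have "x \<in> {p k - r..p k}" using kk xi k xa by (auto simp: dist_real_def)
      ultimately have "x \<in> EE k r" unfolding EE_def by auto
      moreover have "k \<in> {1..N}" using kk k by auto
      ultimately show ?thesis by blast
    next
      case False2: False
      hence ki: "k < i" using ik by auto
      have ak: "a < p (Suc k)" using k ki i by auto
      have ii: "i = Suc k"
      proof (rule ccontr)
        assume "i \<noteq> Suc k"
        hence "Suc (Suc k) \<le> i" using ki by auto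
        hence "p (Suc (Suc k)) \<le> p i" using mono_aux[OF inc] i by auto
        moreover have "d \<le> p (Suc (Suc k)) - p (Suc k)" using d \<open>Suc (Suc k) \<le> i\<close> i by auto
        ultimately show False using ak i xa r by (auto simp: dist_real_def)
      qed
      have "\<not> lft i" "rgt i" unfolding lft_def rgt_def using ii i k False a by auto
      moreover have "x \<in> {p i..p i + r}" using ii ak i xa by (auto simp: dist_real_def)
      ultimately have "x \<in> EE i r" unfolding EE_def by auto
      moreover have "i \<in> {1..N}" using ii i by auto
      ultimately show ?thesis by blast
    qed
  qed
qed

lemma EE_meas: "EE i r \<in> sets borel" unfolding EE_def by auto

lemma EE_measure:
  assumes d: "0 < d" "\<forall>i<N. d \<le> p (Suc i) - p i" and r: "0 < r" "r < d" and i: "i \<in> {1..N}"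
  shows "emeasure (nu \<phi>) (EE i r) = ennreal (mm i r)"
proof -
  have "p (i - 1) + d \<le> p i"
  proof -
    obtain k where k: "i = Suc k" "k < N" using i by (cases i) auto
    thus ?thesis using d(2) by auto
  qed
  moreover have "0 \<le> p (i - 1)" using p_ge i by auto
  ultimately have pr: "0 \<le> p i - r" using r by auto
  show ?thesis unfolding EE_def mm_def
    using emeasure_nu_Icc[OF cont phinn pr, of "p i"] emeasure_nu_Icc[OF cont phinn, of "p i" "p i + r"] pr r
    by auto
qed

lemma mm_nonneg:
  assumes d: "0 < d" "\<forall>i<N. d \<le> p (Suc i) - p i" and r: "0 < r" "r < d" and i: "i \<in> {1..N}"
  shows "0 \<le> mm i r"
proof -
  have "p (i - 1) + d \<le> p i"
  proof -
    obtain k where k: "i = Suc k" "k < N" using i by (cases i) auto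
    thus ?thesis using d(2) by auto
  qed
  moreover have "0 \<le> p (i - 1)" using p_ge i by auto
  ultimately have pr: "0 \<le> p i - r" using r by auto
  show ?thesis unfolding mm_def
    using integral_nonneg_aux[OF cont phinn pr, of "p i"] integral_nonneg_aux[OF cont phinn, of "p i" "p i + r"] pr r
    by auto
qed

lemma mm_lim:
  assumes i: "i \<in> {1..N}"
  shows "((\<lambda>r. mm i r / r) \<longlongrightarrow> (if lft i \<or> rgt i then \<phi> (p i) else 0)) (at_right 0)"
proof -
  have "0 \<le> p (i - 1)" using p_ge i by auto
  moreover have "p (i - 1) < p i" using inc i by (cases i) auto
  ultimately have pp: "0 < p i" by linarith
  show ?thesis
  proof (cases "lft i")
    case True
    have "mm i = (\<lambda>r. integral {p i - r..p i} \<phi>)" unfolding mm_def using True by simp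
    thus ?thesis using True lim_left_aux[OF cont pp] by simp
  next
    case False
    show ?thesis
    proof (cases "rgt i")
      case True
      have "mm i = (\<lambda>r. integral {p i..p i + r} \<phi>)" unfolding mm_def using True False by simp
      thus ?thesis using True lim_right_aux[OF cont, of "p i"] pp by simp
    next
      case False2: False
      have "mm i = (\<lambda>r. 0)" unfolding mm_def using False False2 by (simp add: fun_eq_iff)
      thus ?thesis using False False2 by simp
    qed
  qed
qed

lemma nu_plus_bound:
  "nu_plus \<phi> {x. 0 \<le> x \<and> c \<le> f x} \<le> ereal (\<Sum>i\<in>{1..N}. if (c \<le> f (p (i - 1))) \<noteq> (c \<le> f (p i)) then \<phi> (p i) else 0)"
proof -
  define A where "A = {x. 0 \<le> x \<and> c \<le> f x}"
  obtain d where d: "0 < d" "\<forall>i<N. d \<le> p (Suc i) - p i" using delta_ex[OF inc] by blast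
  have Afin: "emeasure (nu \<phi>) A = ennreal (measure (nu \<phi>) A)"
    using A_fin unfolding A_def by (simp add: emeasure_eq_ennreal_measure)
  have ev: "\<forall>\<^sub>F r in at_right 0.
      (enn2ereal (emeasure (nu \<phi>) (enlarge A r)) - ereal (measure (nu \<phi>) A)) / ereal r
        \<le> ereal ((\<Sum>i\<in>{1..N}. mm i r) / r)"
    unfolding eventually_at_right_field
  proof (intro exI[of _ d] conjI allI impI)
    fix r :: real assume r: "0 < r" "r < d"
    have sn: "0 \<le> (\<Sum>i\<in>{1..N}. mm i r)" by (rule sum_nonneg) (use mm_nonneg[OF d r] in auto)
    have mA: "0 \<le> measure (nu \<phi>) A" by simp
    have "emeasure (nu \<phi>) (enlarge A r) \<le> emeasure (nu \<phi>) (A \<union> (\<Union>i\<in>{1..N}. EE i r))"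
      by (rule emeasure_mono) (use enlarge_sub[OF d r] A_meas EE_meas in \<open>auto simp: A_def\<close>)
    also have "\<dots> \<le> emeasure (nu \<phi>) A + emeasure (nu \<phi>) (\<Union>i\<in>{1..N}. EE i r)"
      by (rule emeasure_subadditive) (use A_meas EE_meas in \<open>auto simp: A_def\<close>)
    also have "emeasure (nu \<phi>) (\<Union>i\<in>{1..N}. EE i r) \<le> (\<Sum>i\<in>{1..N}. emeasure (nu \<phi>) (EE i r))"
      by (rule emeasure_subadditive_finite) (use EE_meas in auto)
    also have "(\<Sum>i\<in>{1..N}. emeasure (nu \<phi>) (EE i r)) = (\<Sum>i\<in>{1..N}. ennreal (mm i r))"
      by (intro sum.cong refl EE_measure[OF d r])
    also have "\<dots> = ennreal (\<Sum>i\<in>{1..N}. mm i r)"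
      by (rule sum_ennreal) (use mm_nonneg[OF d r] in auto)
    finally have "emeasure (nu \<phi>) (enlarge A r) \<le> ennreal (measure (nu \<phi>) A) + ennreal (\<Sum>i\<in>{1..N}. mm i r)"
      unfolding Afin by simp
    also have "\<dots> = ennreal (measure (nu \<phi>) A + (\<Sum>i\<in>{1..N}. mm i r))"
      using sn mA by (simp add: ennreal_plus)
    finally have "enn2ereal (emeasure (nu \<phi>) (enlarge A r)) \<le> ereal (measure (nu \<phi>) A + (\<Sum>i\<in>{1..N}. mm i r))"
      using sn mA by (intro enn_aux) auto
    hence "enn2ereal (emeasure (nu \<phi>) (enlarge A r)) - ereal (measure (nu \<phi>) A) \<le> ereal (\<Sum>i\<in>{1..N}. mm i r)"
      by (cases "enn2ereal (emeasure (nu \<phi>) (enlarge A r))") auto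
    hence "(enn2ereal (emeasure (nu \<phi>) (enlarge A r)) - ereal (measure (nu \<phi>) A)) / ereal r
        \<le> ereal (\<Sum>i\<in>{1..N}. mm i r) / ereal r"
      by (rule ereal_divide_right_mono) (use r in simp)
    thus "(enn2ereal (emeasure (nu \<phi>) (enlarge A r)) - ereal (measure (nu \<phi>) A)) / ereal r
        \<le> ereal ((\<Sum>i\<in>{1..N}. mm i r) / r)" using r by simp
  qed (use d in simp)
  have lim: "((\<lambda>r. ereal ((\<Sum>i\<in>{1..N}. mm i r) / r)) \<longlongrightarrow>
      ereal (\<Sum>i\<in>{1..N}. if lft i \<or> rgt i then \<phi> (p i) else 0)) (at_right 0)"
    unfolding sum_divide_distrib by (intro tendsto_ereal tendsto_sum mm_lim)
  have "nu_plus \<phi> A \<le> Liminf (at_right 0) (\<lambda>r. ereal ((\<Sum>i\<in>{1..N}. mm i r) / r))"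
    unfolding nu_plus_def by (rule Liminf_mono[OF ev])
  also have "\<dots> = ereal (\<Sum>i\<in>{1..N}. if lft i \<or> rgt i then \<phi> (p i) else 0)"
    by (rule lim_imp_Liminf[OF _ lim]) simp
  also have "(\<Sum>i\<in>{1..N}. if lft i \<or> rgt i then \<phi> (p i) else 0)
      = (\<Sum>i\<in>{1..N}. if (c \<le> f (p (i - 1))) \<noteq> (c \<le> f (p i)) then \<phi> (p i) else 0)"
    by (intro sum.cong refl) (auto simp: lft_def rgt_def)
  finally show ?thesis unfolding A_def .
qed

end


lemma pair_sum:
  fixes t :: "nat \<Rightarrow> real"
  shows "(\<Sum>k=1..2*N. t k) = (\<Sum>i=1..N. t (2*i-1) + t (2*i))"
proof (induction N)
  case 0 thus ?case by simp
next
  case (Suc N)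
  have "(\<Sum>k=1..2*Suc N. t k) = (\<Sum>k=1..2*N. t k) + t (2*N+1) + t (2*N+2)"
    by (simp add: sum.cl_ivl_Suc)
  also have "\<dots> = (\<Sum>i=1..N. t (2*i-1) + t (2*i)) + (t (2*Suc N - 1) + t (2*Suc N))"
    using Suc by simp
  also have "\<dots> = (\<Sum>i=1..Suc N. t (2*i-1) + t (2*i))" by (simp add: sum.cl_ivl_Suc)
  finally show ?case .
qed

lemma phi_left_lim:
  fixes \<phi> :: "real \<Rightarrow> real"
  assumes cont: "continuous_on {0..} \<phi>" and p: "0 < p"
  shows "((\<lambda>\<delta>. \<phi> (p - \<delta>)) \<longlongrightarrow> \<phi> p) (at_right 0)"
proof -
  have T: "(\<phi> \<longlongrightarrow> \<phi> p) (at p within {0..})"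
    using cont p unfolding continuous_on_def by auto
  have FL: "filterlim (\<lambda>r. p - r) (at p within {0..}) (at_right (0::real))"
    unfolding filterlim_at
  proof
    show "\<forall>\<^sub>F x in at_right 0. p - x \<in> {0..} \<and> p - x \<noteq> p"
      unfolding eventually_at_right_field using p by (intro exI[of _ p]) auto
    have "((\<lambda>r. p - r) \<longlongrightarrow> p - 0) (at_right (0::real))" by (intro tendsto_intros)
    thus "((\<lambda>r. p - r) \<longlongrightarrow> p) (at_right (0::real))" by simp
  qed
  show ?thesis using filterlim_compose[OF T FL] .
qed

lemma wvar_lower:
  fixes \<phi> f :: "real \<Rightarrow> real" and p :: "nat \<Rightarrow> real"
  assumes cont: "continuous_on {0..} \<phi>" and phinn: "\<forall>x\<ge>0. 0 \<le> \<phi> x"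
    and p0: "p 0 = 0" and inc: "\<forall>i<N. p i < p (Suc i)"
    and cell: "\<forall>i<N. \<forall>x. p i \<le> x \<and> x < p (Suc i) \<longrightarrow> f x = f (p i)"
    and tail: "\<forall>x. p N \<le> x \<longrightarrow> f x = 0" and neg: "\<forall>x<0. f x = 0"
  shows "ereal (\<Sum>i=1..N. \<bar>f (p i) - f (p (i - 1))\<bar> * \<phi> (p i)) \<le> weighted_var \<phi> f"
proof -
  obtain d where d: "0 < d" "\<forall>i<N. d \<le> p (Suc i) - p i" using delta_ex[OF inc] by blast
  define S where "S \<delta> = (\<Sum>i=1..N. \<bar>f (p i) - f (p (i - 1))\<bar> * \<phi> (p i - \<delta>))" for \<delta>
  have pos: "0 < p i" if "i \<in> {1..N}" for i
  proof -
    have "i - 1 \<le> N" using that by auto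
    hence "0 \<le> p (i - 1)" using mono_aux[OF inc, of 0 "i - 1"] p0 by simp
    moreover have "p (i - 1) < p i" using inc that by (cases i) auto
    ultimately show ?thesis by linarith
  qed
  have bound: "ereal (S \<delta>) \<le> weighted_var \<phi> f" if \<delta>: "0 < \<delta>" "\<delta> < d" for \<delta>
  proof -
    define \<xi> where "\<xi> k = (if even k then p (k div 2) else p (Suc (k div 2)) - \<delta>)" for k
    have c1: "0 \<le> \<xi> 0" unfolding \<xi>_def using p0 by simp
    have c2: "\<forall>k<2*N. \<xi> k < \<xi> (Suc k)"
    proof (intro allI impI)
      fix k assume k: "k < 2*N"
      show "\<xi> k < \<xi> (Suc k)"
      proof (cases "even k")
        case True
        then obtain i where i: "k = 2*i" by blast
        hence "i < N" using k by simp
        hence "d \<le> p (Suc i) - p i" using d by auto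
        thus ?thesis unfolding \<xi>_def using i \<delta> by auto
      next
        case False
        then obtain i where i: "k = 2*i+1" using oddE by blast
        thus ?thesis unfolding \<xi>_def using \<delta> by auto
      qed
    qed
    have c3: "closure {x. f x \<noteq> 0} \<subseteq> {\<xi> 0..\<xi> (2*N)}"
    proof -
      have "{x. f x \<noteq> 0} \<subseteq> {0..p N}"
      proof
        fix x assume "x \<in> {x. f x \<noteq> 0}"
        hence "f x \<noteq> 0" by simp
        hence "0 \<le> x" using neg by (meson not_le)
        moreover have "x \<le> p N"
        proof (rule ccontr)
          assume "\<not> x \<le> p N"
          hence "f x = 0" using tail by auto
          thus False using \<open>f x \<noteq> 0\<close> by simp
        qed
        ultimately show "x \<in> {0..p N}" by simp
      qed
      hence "closure {x. f x \<noteq> 0} \<subseteq> {0..p N}" by (rule closure_minimal) simp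
      moreover have "\<xi> 0 = 0" "\<xi> (2*N) = p N" unfolding \<xi>_def using p0 by auto
      ultimately show ?thesis by simp
    qed
    define t where "t k = \<bar>f (\<xi> k) - f (\<xi> (k - 1))\<bar> * \<phi> (\<xi> (k - 1))" for k
    have tsum: "(\<Sum>k=1..2*N. t k) = S \<delta>"
    proof -
      have "(\<Sum>k=1..2*N. t k) = (\<Sum>i=1..N. t (2*i-1) + t (2*i))" by (rule pair_sum)
      also have "\<dots> = S \<delta>" unfolding S_def
      proof (rule sum.cong[OF refl])
        fix i assume i: "i \<in> {1..N}"
        then obtain j where j: "i = Suc j" "j < N" by (cases i) auto
        have x1: "\<xi> (2*i-1) = p i - \<delta>" unfolding \<xi>_def using j by simp
        have e: "2*i - 1 - 1 = 2*j" using j by simp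
        have "\<xi> (2*j) = p j" unfolding \<xi>_def by simp
        hence x0: "\<xi> (2*i-1-1) = p (i - 1)" using e j by simp
        have x2: "\<xi> (2*i) = p i" unfolding \<xi>_def by simp
        have x21: "\<xi> (2*i-1) = p i - \<delta>" using x1 .
        have gap: "d \<le> p i - p (i - 1)" using d j by auto
        have "p j \<le> p (Suc j) - \<delta> \<and> p (Suc j) - \<delta> < p (Suc j)"
          using gap j \<delta> by simp
        hence "f (p (Suc j) - \<delta>) = f (p j)" using cell j(2) by blast
        hence "f (p i - \<delta>) = f (p (i - 1))" using j by simp
        hence "t (2*i-1) = 0" unfolding t_def using x1 x0 by simp
        moreover have "t (2*i) = \<bar>f (p i) - f (p (i - 1))\<bar> * \<phi> (p i - \<delta>)"
          unfolding t_def using x2 \<open>f (p i - \<delta>) = f (p (i - 1))\<close> x21 by simp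
        ultimately show "t (2*i-1) + t (2*i) = \<bar>f (p i) - f (p (i - 1))\<bar> * \<phi> (p i - \<delta>)" by simp
      qed
      finally show ?thesis .
    qed
    have "ereal (S \<delta>) \<in> {ereal (\<Sum>k = 1..m. \<bar>f (\<xi> k) - f (\<xi> (k - 1))\<bar> * \<phi> (\<xi> (k - 1))) | m \<xi>.
      0 \<le> \<xi> 0 \<and> (\<forall>k<m. \<xi> k < \<xi> (Suc k)) \<and> closure {x. f x \<noteq> 0} \<subseteq> {\<xi> 0 .. \<xi> m}}"
    proof -
      have eq: "ereal (S \<delta>) = ereal (\<Sum>k = 1..2*N. \<bar>f (\<xi> k) - f (\<xi> (k - 1))\<bar> * \<phi> (\<xi> (k - 1)))"
        using tsum unfolding t_def by simp
      show ?thesis unfolding mem_Collect_eq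
        by (intro exI[of _ "2*N"] exI[of _ \<xi>] conjI eq c1 c2 c3)
    qed
    thus ?thesis unfolding weighted_var_def by (rule Sup_upper)
  qed
  have lim: "((\<lambda>\<delta>. ereal (S \<delta>)) \<longlongrightarrow> ereal (S 0)) (at_right 0)"
    unfolding S_def using pos
    by (intro tendsto_ereal tendsto_sum tendsto_mult_left) (auto intro: phi_left_lim[OF cont])
  have ev: "\<forall>\<^sub>F \<delta> in at_right 0. ereal (S \<delta>) \<le> weighted_var \<phi> f"
    unfolding eventually_at_right_field using d bound by (intro exI[of _ d]) auto
  have "ereal (S 0) \<le> weighted_var \<phi> f"
    by (rule tendsto_le[OF _ tendsto_const lim ev]) simp
  thus ?thesis unfolding S_def by simp
qed


lemma levels:
  fixes f :: "real \<Rightarrow> real" and p :: "nat \<Rightarrow> real"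
  assumes p0: "p 0 = 0" and inc: "\<forall>i<N. p i < p (Suc i)"
    and cell: "\<forall>i<N. \<forall>x. p i \<le> x \<and> x < p (Suc i) \<longrightarrow> f x = f (p i)"
    and tail: "\<forall>x. p N \<le> x \<longrightarrow> f x = 0" and fnn: "\<forall>x\<ge>0. 0 \<le> f x"
  obtains n cc where "cc 0 = 0" "\<forall>j<n. cc j < cc (Suc j)" "\<forall>x\<ge>0. \<exists>k\<le>n. f x = cc k"
proof -
  define C where "C = insert 0 ((\<lambda>i. f (p i)) ` {..N})"
  have fin: "finite C" unfolding C_def by simp
  have z: "0 \<in> C" unfolding C_def by simp
  have pge: "0 \<le> p i" if "i \<le> N" for i using mono_aux[OF inc, of 0 i] p0 that by simp
  have nn: "\<forall>y\<in>C. 0 \<le> y" unfolding C_def using pge fnn by auto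
  obtain n cc where c0: "cc 0 = 0" and ci: "\<forall>j<n. cc j < cc (Suc j)"
    and call: "\<forall>y\<in>C. \<exists>k\<le>n. y = cc k" and cmem: "\<forall>k\<le>n. cc k \<in> C"
    by (rule sorted_set_aux[OF fin z nn])
  have "\<forall>x\<ge>0. \<exists>k\<le>n. f x = cc k"
  proof (intro allI impI)
    fix x :: real assume x: "0 \<le> x"
    obtain i where i: "i \<le> N" "f x = f (p i)" using cell_ex[OF p0 inc cell tail x] by blast
    have "f x \<in> C" unfolding C_def using i by auto
    thus "\<exists>k\<le>n. f x = cc k" using call by blast
  qed
  thus ?thesis using that c0 ci by blast
qed

lemma layer_iff:
  fixes cc :: "nat \<Rightarrow> real"
  assumes inc: "\<forall>j<n. cc j < cc (Suc j)" and j: "j < n" and k: "k \<le> n"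
  shows "cc (Suc j) \<le> cc k \<longleftrightarrow> j < k"
proof
  assume a: "cc (Suc j) \<le> cc k"
  show "j < k"
  proof (rule ccontr)
    assume "\<not> j < k"
    hence "cc k \<le> cc j" using mono_aux[OF inc, of k j] j by simp
    moreover have "cc j < cc (Suc j)" using inc j by simp
    ultimately show False using a by simp
  qed
next
  assume "j < k"
  thus "cc (Suc j) \<le> cc k" using mono_aux[OF inc, of "Suc j" k] k by simp
qed

lemma layer_point:
  fixes cc :: "nat \<Rightarrow> real"
  assumes inc: "\<forall>j<n. cc j < cc (Suc j)" and c0: "cc 0 = 0" and k: "k \<le> n"
  shows "(\<Sum>j<n. (cc (Suc j) - cc j) * (if cc (Suc j) \<le> cc k then 1 else 0)) = cc k"
proof -
  have "(\<Sum>j<n. (cc (Suc j) - cc j) * (if cc (Suc j) \<le> cc k then 1 else 0))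
      = (\<Sum>j<n. if j < k then cc (Suc j) - cc j else 0)"
    by (rule sum.cong[OF refl]) (use layer_iff[OF inc _ k] in auto)
  also have "\<dots> = (\<Sum>j\<in>{j\<in>{..<n}. j < k}. cc (Suc j) - cc j)"
    by (rule sum.inter_filter[symmetric]) simp
  also have "{j\<in>{..<n}. j < k} = {..<k}" using k by auto
  also have "(\<Sum>j<k. cc (Suc j) - cc j) = cc k" using sum_lessThan_telescope[of cc k] c0 by simp
  finally show ?thesis .
qed

lemma layer_jump_aux:
  fixes cc :: "nat \<Rightarrow> real"
  assumes inc: "\<forall>j<n. cc j < cc (Suc j)" and a: "a \<le> n" and b: "b \<le> n" and ab: "a \<le> b"
  shows "(\<Sum>j<n. (cc (Suc j) - cc j) * (if (cc (Suc j) \<le> cc a) \<noteq> (cc (Suc j) \<le> cc b) then 1 else 0)) = \<bar>cc a - cc b\<bar>"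
proof -
  have "(\<Sum>j<n. (cc (Suc j) - cc j) * (if (cc (Suc j) \<le> cc a) \<noteq> (cc (Suc j) \<le> cc b) then 1 else 0))
      = (\<Sum>j<n. if a \<le> j \<and> j < b then cc (Suc j) - cc j else 0)"
    by (rule sum.cong[OF refl]) (use layer_iff[OF inc _ a] layer_iff[OF inc _ b] ab in auto)
  also have "\<dots> = (\<Sum>j\<in>{j\<in>{..<n}. a \<le> j \<and> j < b}. cc (Suc j) - cc j)"
    by (rule sum.inter_filter[symmetric]) simp
  also have "{j\<in>{..<n}. a \<le> j \<and> j < b} = {a..<b}" using b by auto
  also have "(\<Sum>j=a..<b. cc (Suc j) - cc j) = cc b - cc a" by (rule sum_Suc_diff'[OF ab])
  also have "cc b - cc a = \<bar>cc a - cc b\<bar>" using mono_aux[OF inc ab b] by simp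
  finally show ?thesis .
qed

lemma layer_jump:
  fixes cc :: "nat \<Rightarrow> real"
  assumes inc: "\<forall>j<n. cc j < cc (Suc j)" and a: "a \<le> n" and b: "b \<le> n"
  shows "(\<Sum>j<n. (cc (Suc j) - cc j) * (if (cc (Suc j) \<le> cc a) \<noteq> (cc (Suc j) \<le> cc b) then 1 else 0)) = \<bar>cc a - cc b\<bar>"
proof (cases "a \<le> b")
  case True thus ?thesis by (rule layer_jump_aux[OF inc a b])
next
  case False
  hence "(\<Sum>j<n. (cc (Suc j) - cc j) * (if (cc (Suc j) \<le> cc b) \<noteq> (cc (Suc j) \<le> cc a) then 1 else 0)) = \<bar>cc b - cc a\<bar>"
    by (intro layer_jump_aux[OF inc b a]) auto
  thus ?thesis by (simp add: eq_commute abs_minus_commute)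
qed

lemma Kext_lemma:
  fixes K :: "real \<Rightarrow> real"
  assumes mono: "mono_on {0..} K" and t: "0 \<le> t" and tl: "ennreal t \<le> \<Lambda>"
  shows "ereal (K t) \<le> K_ext K \<Lambda>"
proof (cases "\<Lambda> = \<infinity>")
  case True
  have "ereal (K t) \<le> (SUP s\<in>{0..}. ereal (K s))" by (rule SUP_upper) (use t in simp)
  thus ?thesis unfolding K_ext_def using True by simp
next
  case False
  hence "enn2real (ennreal t) \<le> enn2real \<Lambda>" using tl by (intro enn2real_mono) (auto simp: top_unique less_top)
  hence "t \<le> enn2real \<Lambda>" using t by simp
  hence "K t \<le> K (enn2real \<Lambda>)" using mono t by (intro mono_onD[OF mono]) auto
  thus ?thesis unfolding K_ext_def using False by simp
qed

lemma int_ind_sum: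
  fixes a :: "nat \<Rightarrow> real" and A :: "nat \<Rightarrow> 'a set"
  assumes fin: "finite T" and meas: "\<forall>j\<in>T. A j \<in> sets M" and finm: "\<forall>j\<in>T. emeasure M (A j) < \<infinity>"
  shows "integrable M (\<lambda>x. \<Sum>j\<in>T. a j * indicator (A j) x)"
    and "integral\<^sup>L M (\<lambda>x. \<Sum>j\<in>T. a j * indicator (A j) x) = (\<Sum>j\<in>T. a j * measure M (A j \<inter> space M))"
proof -
  have int: "integrable M (\<lambda>x. a j * indicator (A j) x :: real)" if "j \<in> T" for j
    using meas finm that by (intro integrable_mult_right integrable_real_indicator) auto
  show "integrable M (\<lambda>x. \<Sum>j\<in>T. a j * indicator (A j) x)" by (rule Bochner_Integration.integrable_sum) (rule int)
  have "integral\<^sup>L M (\<lambda>x. \<Sum>j\<in>T. a j * indicator (A j) x) = (\<Sum>j\<in>T. integral\<^sup>L M (\<lambda>x. a j * indicator (A j) x))"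
    by (rule Bochner_Integration.integral_sum) (rule int)
  also have "\<dots> = (\<Sum>j\<in>T. a j * measure M (A j \<inter> space M))"
    by (simp add: Bochner_Integration.integral_indicator)
  finally show "integral\<^sup>L M (\<lambda>x. \<Sum>j\<in>T. a j * indicator (A j) x) = (\<Sum>j\<in>T. a j * measure M (A j \<inter> space M))" .
qed


theorem corollary2p7:
  fixes \<phi> I J K L f :: "real \<Rightarrow> real"
  assumes phi_cont: "continuous_on {0..} \<phi>"
    and phi_nonneg: "\<forall>x\<ge>0. 0 \<le> \<phi> x"
    and I_nonneg: "\<forall>x\<ge>0. 0 \<le> I x"
    and J_nonneg: "\<forall>x\<ge>0. 0 \<le> J x"
    and K_nonneg: "\<forall>x\<ge>0. 0 \<le> K x"
    and L_nonneg: "\<forall>x\<ge>0. 0 \<le> L x"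
    and IJKL: "\<forall>a b. 0 \<le> a \<longrightarrow> 0 \<le> b \<longrightarrow> I (a * b) \<le> b * J a + K (a * L b)"
    and J_iso: "lower_isoperimetric \<phi> J"
    and K_mono: "mono_on {0..} K"
    and K_concave: "concave_on {0..} K"
    and L_concave: "concave_on {0..} L"
    and f_step: "step_fun f"
    and f_nonneg: "\<forall>x\<ge>0. 0 \<le> f x"
  shows "ereal (I (\<integral>x. f x \<partial>nu \<phi>))
           \<le> K_ext K (\<integral>\<^sup>+x. ennreal (L (f x)) \<partial>nu \<phi>) + weighted_var \<phi> f"
proof -
  obtain N p where p0: "p 0 = 0" and inc: "\<forall>i<N. p i < p (Suc i)"
    and cell: "\<forall>i<N. \<forall>x. p i \<le> x \<and> x < p (Suc i) \<longrightarrow> f x = f (p i)"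
    and tail: "\<forall>x. p N \<le> x \<longrightarrow> f x = 0" and neg: "\<forall>x<0. f x = 0"
    by (rule step_structure[OF f_step])
  have fmeas: "f \<in> borel_measurable borel" by (rule step_measurable[OF f_step])
  obtain n cc where c0: "cc 0 = 0" and cinc: "\<forall>j<n. cc j < cc (Suc j)"
    and clev: "\<forall>x\<ge>0. \<exists>k\<le>n. f x = cc k"
    by (rule levels[OF p0 inc cell tail f_nonneg])
  define h where "h j = cc (Suc j) - cc j" for j
  define A where "A j = {x. 0 \<le> x \<and> cc (Suc j) \<le> f x}" for j
  define \<mu> where "\<mu> j = measure (nu \<phi>) (A j)" for j
  define \<Lambda> where "\<Lambda> = (\<integral>\<^sup>+x. ennreal (L (f x)) \<partial>nu \<phi>)"
  have hpos: "0 < h j" if "j < n" for j unfolding h_def using cinc that by simp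
  have cpos: "0 < cc (Suc j)" if "j < n" for j using strict_aux[OF cinc, of 0 "Suc j"] c0 that by simp
  have Ameas: "A j \<in> sets borel" if "j < n" for j
    unfolding A_def by (rule A_meas[OF phi_cont phi_nonneg p0 inc cell tail fmeas cpos[OF that]])
  have Afin: "emeasure (nu \<phi>) (A j) < \<infinity>" if "j < n" for j
    unfolding A_def by (rule A_fin[OF phi_cont phi_nonneg p0 inc cell tail fmeas cpos[OF that]])
  have Asub: "A j \<subseteq> {0..}" for j unfolding A_def by auto
  have mu_nn: "0 \<le> \<mu> j" for j unfolding \<mu>_def by simp
  have hnn: "0 \<le> h j" if "j < n" for j using hpos[OF that] by simp
  have pge: "0 \<le> p i" if "i \<le> N" for i using mono_aux[OF inc, of 0 i] p0 that by simp

  have decomp: "f x = (\<Sum>j<n. h j * indicator (A j) x)" for x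
  proof (cases "0 \<le> x")
    case True
    then obtain k where k: "k \<le> n" "f x = cc k" using clev by blast
    have "(\<Sum>j<n. h j * indicator (A j) x) = (\<Sum>j<n. (cc (Suc j) - cc j) * (if cc (Suc j) \<le> cc k then 1 else 0))"
      unfolding h_def A_def using True k by (intro sum.cong refl) (auto simp: indicator_def)
    also have "\<dots> = cc k" by (rule layer_point[OF cinc c0 k(1)])
    finally show ?thesis using k by simp
  next
    case False
    hence "f x = 0" using neg by simp
    moreover have "indicator (A j) x = (0::real)" for j unfolding A_def using False by simp
    ultimately show ?thesis by simp
  qed
  define X where "X = (\<Sum>j<n. h j * \<mu> j)"
  have Xnn: "0 \<le> X" unfolding X_def using hnn mu_nn by (intro sum_nonneg mult_nonneg_nonneg) auto
  have fint: "(\<integral>x. f x \<partial>nu \<phi>) = X"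
  proof -
    have "(\<integral>x. f x \<partial>nu \<phi>) = (\<integral>x. (\<Sum>j<n. h j * indicator (A j) x) \<partial>nu \<phi>)"
      using decomp by simp
    also have "\<dots> = (\<Sum>j<n. h j * measure (nu \<phi>) (A j \<inter> space (nu \<phi>)))"
      by (rule int_ind_sum(2)) (use Ameas Afin in auto)
    also have "\<dots> = X" unfolding X_def \<mu>_def by simp
    finally show ?thesis .
  qed

  define SV where "SV = (\<Sum>i=1..N. \<bar>f (p i) - f (p (i - 1))\<bar> * \<phi> (p i))"
  have SV_V: "ereal SV \<le> weighted_var \<phi> f"
    unfolding SV_def by (rule wvar_lower[OF phi_cont phi_nonneg p0 inc cell tail neg])
  have SV_nn: "0 \<le> SV" unfolding SV_def
    using phi_nonneg pge by (intro sum_nonneg mult_nonneg_nonneg) auto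
  define B where "B j = (\<Sum>i=1..N. if (cc (Suc j) \<le> f (p (i - 1))) \<noteq> (cc (Suc j) \<le> f (p i)) then \<phi> (p i) else 0)" for j
  have JB: "J (\<mu> j) \<le> B j" if j: "j < n" for j
  proof -
    have "ereal (J (\<mu> j)) \<le> nu_plus \<phi> (A j)"
      using J_iso Ameas[OF j] Asub[of j] Afin[OF j] unfolding lower_isoperimetric_def \<mu>_def by auto
    also have "\<dots> \<le> ereal (B j)"
      unfolding A_def B_def by (rule nu_plus_bound[OF phi_cont phi_nonneg p0 inc cell tail fmeas cpos[OF j]])
    finally show ?thesis by simp
  qed
  define SJ where "SJ = (\<Sum>j<n. h j * J (\<mu> j))"
  have SJ_SV: "SJ \<le> SV"
  proof -
    have "SJ \<le> (\<Sum>j<n. h j * B j)" unfolding SJ_def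
      using JB hnn by (intro sum_mono mult_left_mono) auto
    also have "\<dots> = (\<Sum>j<n. \<Sum>i=1..N. h j * (if (cc (Suc j) \<le> f (p (i - 1))) \<noteq> (cc (Suc j) \<le> f (p i)) then \<phi> (p i) else 0))"
      unfolding B_def by (simp add: sum_distrib_left)
    also have "\<dots> = (\<Sum>i=1..N. \<Sum>j<n. h j * (if (cc (Suc j) \<le> f (p (i - 1))) \<noteq> (cc (Suc j) \<le> f (p i)) then \<phi> (p i) else 0))"
      by (rule sum.swap)
    also have "\<dots> = SV" unfolding SV_def
    proof (rule sum.cong[OF refl])
      fix i assume i: "i \<in> {1..N}"
      obtain a where a: "a \<le> n" "f (p (i - 1)) = cc a" using clev pge[of "i - 1"] i by force
      obtain b where b: "b \<le> n" "f (p i) = cc b" using clev pge[of i] i by force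
      have "(\<Sum>j<n. h j * (if (cc (Suc j) \<le> f (p (i - 1))) \<noteq> (cc (Suc j) \<le> f (p i)) then \<phi> (p i) else 0))
          = (\<Sum>j<n. (cc (Suc j) - cc j) * (if (cc (Suc j) \<le> cc a) \<noteq> (cc (Suc j) \<le> cc b) then 1 else 0)) * \<phi> (p i)"
        unfolding h_def a b sum_distrib_right by (intro sum.cong refl) auto
      also have "\<dots> = \<bar>cc a - cc b\<bar> * \<phi> (p i)" by (subst layer_jump[OF cinc a(1) b(1)]) (rule refl)
      also have "\<dots> = \<bar>f (p i) - f (p (i - 1))\<bar> * \<phi> (p i)" using a b by (simp add: abs_minus_commute)
      finally show "(\<Sum>j<n. h j * (if (cc (Suc j) \<le> f (p (i - 1))) \<noteq> (cc (Suc j) \<le> f (p i)) then \<phi> (p i) else 0))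
          = \<bar>f (p i) - f (p (i - 1))\<bar> * \<phi> (p i)" .
    qed
    finally show ?thesis .
  qed

  have main: "\<exists>\<Lambda>'. 0 \<le> \<Lambda>' \<and> ennreal \<Lambda>' \<le> \<Lambda> \<and> I X \<le> SJ + K \<Lambda>'"
  proof (cases "X = 0")
    case True
    have "I (0 * 0) \<le> 0 * J 0 + K (0 * L 0)" using IJKL by blast
    hence "I X \<le> K 0" using True by simp
    moreover have "0 \<le> SJ" unfolding SJ_def
      using hnn mu_nn J_nonneg by (intro sum_nonneg mult_nonneg_nonneg) auto
    ultimately have "I X \<le> SJ + K 0" by simp
    thus ?thesis by (intro exI[of _ 0]) auto
  next
    case False
    hence Xpos: "0 < X" using Xnn by simp
    define T where "T = {j\<in>{..<n}. 0 < \<mu> j}"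
    have Tfin: "finite T" unfolding T_def by simp
    have Tsub: "T \<subseteq> {..<n}" unfolding T_def by auto
    have XT: "(\<Sum>j\<in>T. h j * \<mu> j) = X" unfolding X_def
    proof (rule sum.mono_neutral_left[OF _ Tsub])
      show "\<forall>j\<in>{..<n} - T. h j * \<mu> j = 0"
      proof
        fix j assume "j \<in> {..<n} - T"
        hence "\<mu> j = 0" unfolding T_def using mu_nn[of j] by auto
        thus "h j * \<mu> j = 0" by simp
      qed
    qed simp
    have Tne: "T \<noteq> {}" using XT False by auto
    have mpos: "\<forall>j\<in>T. 0 < \<mu> j" unfolding T_def by auto
    have hposT: "\<forall>j\<in>T. 0 < h j" using hpos Tsub by auto
    define w where "w j = h j * \<mu> j / X" for j
    define y where "y j = \<mu> j * L (X / \<mu> j)" for j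
    have wsum: "(\<Sum>j\<in>T. w j) = 1" unfolding w_def using XT Xpos
      by (simp add: sum_divide_distrib[symmetric])
    have wnn: "0 \<le> w j" if "j \<in> T" for j
      unfolding w_def using hposT mpos Xpos that by (intro divide_nonneg_pos mult_nonneg_nonneg) auto
    have ynn: "y j \<in> {0..}" if "j \<in> T" for j
    proof -
      have "0 < \<mu> j" using mpos that by blast
      hence "0 \<le> X / \<mu> j" using Xpos by simp
      hence "0 \<le> L (X / \<mu> j)" using L_nonneg by simp
      thus ?thesis unfolding y_def using mu_nn[of j] by simp
    qed
    have Ij: "I X \<le> (X / \<mu> j) * J (\<mu> j) + K (y j)" if "j \<in> T" for j
    proof -
      have mj: "0 < \<mu> j" using mpos that by blast
      hence "0 \<le> X / \<mu> j" using Xpos by simp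
      hence "I (\<mu> j * (X / \<mu> j)) \<le> (X / \<mu> j) * J (\<mu> j) + K (\<mu> j * L (X / \<mu> j))"
        using IJKL mu_nn[of j] by blast
      moreover have "\<mu> j * (X / \<mu> j) = X" using mj by simp
      ultimately have "I X \<le> (X / \<mu> j) * J (\<mu> j) + K (\<mu> j * L (X / \<mu> j))" by simp
      thus ?thesis unfolding y_def using mpos that by simp
    qed
    define \<Lambda>' where "\<Lambda>' = (\<Sum>j\<in>T. w j * y j)"
    have L0: "0 \<le> \<Lambda>'" unfolding \<Lambda>'_def using wnn ynn by (intro sum_nonneg mult_nonneg_nonneg) auto
    have "I X = (\<Sum>j\<in>T. w j) * I X" using wsum by simp
    also have "\<dots> = (\<Sum>j\<in>T. w j * I X)" by (simp add: sum_distrib_right)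
    also have "\<dots> \<le> (\<Sum>j\<in>T. w j * ((X / \<mu> j) * J (\<mu> j) + K (y j)))"
      using Ij wnn by (intro sum_mono mult_left_mono) auto
    also have "\<dots> = (\<Sum>j\<in>T. h j * J (\<mu> j)) + (\<Sum>j\<in>T. w j * K (y j))"
    proof -
      have "w j * ((X / \<mu> j) * J (\<mu> j) + K (y j)) = h j * J (\<mu> j) + w j * K (y j)" if "j \<in> T" for j
      proof -
        have "\<mu> j \<noteq> 0" using mpos that by auto
        thus ?thesis unfolding w_def using Xpos by (simp add: field_simps)
      qed
      thus ?thesis by (simp add: sum.distrib)
    qed
    also have "(\<Sum>j\<in>T. h j * J (\<mu> j)) \<le> SJ" unfolding SJ_def
      by (rule sum_mono2[OF _ Tsub]) (use hnn mu_nn J_nonneg in \<open>auto intro!: mult_nonneg_nonneg\<close>)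
    also have "(\<Sum>j\<in>T. w j * K (y j)) \<le> K (\<Sum>j\<in>T. w j *\<^sub>R y j)"
      by (rule concave_on_sum[OF Tfin Tne K_concave wsum]) (use wnn ynn in auto)
    also have "(\<Sum>j\<in>T. w j *\<^sub>R y j) = \<Lambda>'" unfolding \<Lambda>'_def by simp
    finally have IX: "I X \<le> SJ + K \<Lambda>'" by simp
    define g where "g x = (\<Sum>j\<in>T. (h j * \<mu> j * L (X / \<mu> j) / X) * indicator (A j) x)" for x
    have gint: "integrable (nu \<phi>) g"
      unfolding g_def by (rule int_ind_sum(1)) (use Tfin Ameas Afin Tsub in auto)
    have gI: "integral\<^sup>L (nu \<phi>) g = \<Lambda>'"
    proof -
      have "integral\<^sup>L (nu \<phi>) g = (\<Sum>j\<in>T. (h j * \<mu> j * L (X / \<mu> j) / X) * measure (nu \<phi>) (A j \<inter> space (nu \<phi>)))"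
        unfolding g_def by (rule int_ind_sum(2)) (use Tfin Ameas Afin Tsub in auto)
      also have "\<dots> = \<Lambda>'" unfolding \<Lambda>'_def w_def y_def \<mu>_def
        by (intro sum.cong refl) (simp add: field_simps)
      finally show ?thesis .
    qed
    have coef_nn: "0 \<le> h j * \<mu> j * L (X / \<mu> j) / X" if "j \<in> T" for j
    proof -
      have mj: "0 < \<mu> j" using mpos that by blast
      hence "0 \<le> X / \<mu> j" using Xpos by simp
      hence "0 \<le> L (X / \<mu> j)" using L_nonneg by simp
      moreover have "0 < h j" using hposT that by blast
      ultimately show ?thesis using mj Xpos by (intro divide_nonneg_pos mult_nonneg_nonneg) auto
    qed
    have gnn: "0 \<le> g x" for x unfolding g_def using coef_nn by (intro sum_nonneg mult_nonneg_nonneg) auto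
    have gle: "g x \<le> L (f x)" for x
    proof (cases "0 \<le> x")
      case False
      hence "g x = 0" unfolding g_def A_def by simp
      moreover have "f x = 0" using neg False by simp
      ultimately show ?thesis using L_nonneg by simp
    next
      case True
      define S where "S = {j\<in>T. x \<in> A j}"
      have Sfin: "finite S" unfolding S_def using Tfin by simp
      have "g x = (\<Sum>j\<in>T. if x \<in> A j then h j * \<mu> j * L (X / \<mu> j) / X else 0)"
        unfolding g_def by (intro sum.cong refl) (auto simp: indicator_def)
      also have "\<dots> = (\<Sum>j\<in>S. h j * \<mu> j * L (X / \<mu> j) / X)"
        unfolding S_def by (rule sum.inter_filter[symmetric, OF Tfin])
      also have "\<dots> \<le> L (f x)"
      proof (rule pointwise_aux[OF L_concave L_nonneg Sfin _ _ Xpos])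
        show "\<forall>j\<in>S. 0 < h j" using hposT unfolding S_def by auto
        show "\<forall>j\<in>S. 0 < \<mu> j" using mpos unfolding S_def by auto
        have "(\<Sum>j\<in>S. h j * \<mu> j) \<le> (\<Sum>j\<in>T. h j * \<mu> j)"
          by (rule sum_mono2[OF Tfin]) (use hnn mu_nn Tsub in \<open>auto simp: S_def intro!: mult_nonneg_nonneg\<close>)
        thus "(\<Sum>j\<in>S. h j * \<mu> j) \<le> X" using XT by simp
        have "(\<Sum>j\<in>S. h j) \<le> (\<Sum>j\<in>{j\<in>{..<n}. x \<in> A j}. h j)"
          by (rule sum_mono2) (use hnn Tsub in \<open>auto simp: S_def\<close>)
        also have "\<dots> = (\<Sum>j<n. if x \<in> A j then h j else 0)" by (rule sum.inter_filter) simp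
        also have "\<dots> = (\<Sum>j<n. h j * indicator (A j) x)" by (intro sum.cong refl) (auto simp: indicator_def)
        also have "\<dots> = f x" using decomp[of x] by simp
        finally show "(\<Sum>j\<in>S. h j) \<le> f x" .
      qed
      finally show ?thesis .
    qed
    have "ennreal \<Lambda>' = (\<integral>\<^sup>+x. ennreal (g x) \<partial>nu \<phi>)"
      using nn_integral_eq_integral[OF gint] gnn gI by simp
    also have "\<dots> \<le> \<Lambda>" unfolding \<Lambda>_def
      by (intro nn_integral_mono ennreal_leI gle)
    finally have "ennreal \<Lambda>' \<le> \<Lambda>" .
    thus ?thesis using L0 IX by blast
  qed
  then obtain \<Lambda>' where L1: "0 \<le> \<Lambda>'" and L2: "ennreal \<Lambda>' \<le> \<Lambda>" and L3: "I X \<le> SJ + K \<Lambda>'" by blast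
  have "ereal (I X) \<le> ereal (K \<Lambda>') + ereal SJ" using L3 by simp
  also have "\<dots> \<le> K_ext K \<Lambda> + weighted_var \<phi> f"
  proof (rule add_mono)
    show "ereal (K \<Lambda>') \<le> K_ext K \<Lambda>" by (rule Kext_lemma[OF K_mono L1 L2])
    have "ereal SJ \<le> ereal SV" using SJ_SV by simp
    thus "ereal SJ \<le> weighted_var \<phi> f" using SV_V by (rule order_trans)
  qed
  finally show ?thesis unfolding fint \<Lambda>_def .
qed


end
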